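(* Let $\mathcal C=\mathcal C(I,A,(\rho_i)_{i\in I},(C^a)_{a\in A})$ be a connected Cartan scheme and $\mathcal R=\mathcal R(\mathcal C,(R^a)_{a\in A})$ a finite root system of type $\mathcal C$. Let $a,b\in A$ and $i,j,l\in I$ such that $i\neq j$, $\rho_i(a)=\rho_j(a)=b\neq a$, and $\rho_l(a)=a$. Then: (1) $c^a_{ij}c^a_{il}c^a_{jl}=0$; (2) if $\rho_i\rho_l(b)\neq\rho_l(b)$ and $\rho_j\rho_l(b)\neq\rho_l(b)$, then $c^a_{ln}=c^b_{ln}$ for all $n\in I$.
   Context: Let $I$ be a nonempty finite set and $\{\alpha_i\mid i\in I\}$ the standard basis of $\mathbb Z^I$; $\mathbb N_0=\{0,1,2,\dots\}$. A generalized Cartan matrix is $C=(c_{ij})_{i,j\in I}\in\mathbb Z^{I\times I}$ with $c_{ii}=2$, $c_{jk}\le0$ for $j\ne k$, and $c_{ij}=0\Rightarrow c_{ji}=0$. A Cartan scheme $\mathcal C=\mathcal C(I,A,(\rho_i)_{i\in I},(C^a)_{a\in A})$ consists of a nonempty set $A$, maps $\rho_i:A\to A$ and generalized Cartan matrices $C^a=(c^a_{jk})_{j,k\in I}$ such that (C1) $\rho_i^2=\mathrm{id}$ and (C2) $c^a_{ij}=c^{\rho_i(a)}_{ij}$ for all $a\in A$, $i,j\in I$. It is connected if the group generated by the $\rho_i$ acts transitively on $A$. For $i\in I$, $a\in A$ let $\sigma_i^a\in\mathrm{Aut}(\mathbb Z^I)$, $\sigma_i^a(\alpha_j)=\alpha_j-c^a_{ij}\alpha_i$.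 A root system of type $\mathcal C$ is a family $\mathcal R=\mathcal R(\mathcal C,(R^a)_{a\in A})$ of subsets $R^a\subset\mathbb Z^I$ such that, writing $R^a_+=R^a\cap\mathbb N_0^I$ and $m^a_{i,j}=|R^a\cap(\mathbb N_0\alpha_i+\mathbb N_0\alpha_j)|$, for all $a\in A$, $i,j\in I$: (R1) $R^a=R^a_+\cup(-R^a_+)$; (R2) $R^a\cap\mathbb Z\alpha_i=\{\alpha_i,-\alpha_i\}$; (R3) $\sigma_i^a(R^a)=R^{\rho_i(a)}$; (R4) if $i\neq j$ and $m^a_{i,j}$ is finite then $(\rho_i\rho_j)^{m^a_{i,j}}(a)=a$. It is finite if every $R^a$ is finite. *)

theory Defs
  imports Main
begin

(* Index set I is the finite type 'i (I = UNIV), the set A is the type 'a (A = UNIV).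
   Z^I is represented by functions 'i => int. *)

definition gcm :: "('i \<Rightarrow> 'i \<Rightarrow> int) \<Rightarrow> bool" where
  "gcm c \<longleftrightarrow> (\<forall>i. c i i = 2) \<and> (\<forall>j k. j \<noteq> k \<longrightarrow> c j k \<le> 0)
     \<and> (\<forall>i j. c i j = 0 \<longrightarrow> c j i = 0)"

definition cartan_scheme :: "('i::finite \<Rightarrow> 'a \<Rightarrow> 'a) \<Rightarrow> ('a \<Rightarrow> 'i \<Rightarrow> 'i \<Rightarrow> int) \<Rightarrow> bool" where
  "cartan_scheme rho C \<longleftrightarrow> (\<forall>a. gcm (C a))
     \<and> (\<forall>i a. rho i (rho i a) = a)
     \<and> (\<forall>a i j. C a i j = C (rho i a) i j)"

definition connected_cs :: "('i \<Rightarrow> 'a \<Rightarrow> 'a) \<Rightarrow> bool" where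
  "connected_cs rho \<longleftrightarrow> (\<forall>a b. (a, b) \<in> (\<Union>i. {(x, rho i x) | x. True})\<^sup>*)"

definition alpha :: "'i \<Rightarrow> 'i \<Rightarrow> int" where
  "alpha i = (\<lambda>k. if k = i then 1 else 0)"

(* sigma_i^a, the linear map with sigma_i^a(alpha_j) = alpha_j - c^a_ij alpha_i *)
definition sigma :: "('a \<Rightarrow> 'i::finite \<Rightarrow> 'i \<Rightarrow> int) \<Rightarrow> 'a \<Rightarrow> 'i \<Rightarrow> ('i \<Rightarrow> int) \<Rightarrow> ('i \<Rightarrow> int)" where
  "sigma C a i v = (\<lambda>k. v k - (if k = i then (\<Sum>j\<in>UNIV. C a i j * v j) else 0))"

definition pos_roots :: "('a \<Rightarrow> ('i \<Rightarrow> int) set) \<Rightarrow> 'a \<Rightarrow> ('i \<Rightarrow> int) set" where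
  "pos_roots R a = R a \<inter> {v. \<forall>k. 0 \<le> v k}"

definition rank2_roots :: "('a \<Rightarrow> ('i \<Rightarrow> int) set) \<Rightarrow> 'a \<Rightarrow> 'i \<Rightarrow> 'i \<Rightarrow> ('i \<Rightarrow> int) set" where
  "rank2_roots R a i j = R a \<inter>
     {v. \<exists>p q :: nat. v = (\<lambda>k. int p * alpha i k + int q * alpha j k)}"

definition root_system :: "('i::finite \<Rightarrow> 'a \<Rightarrow> 'a) \<Rightarrow> ('a \<Rightarrow> 'i \<Rightarrow> 'i \<Rightarrow> int)
    \<Rightarrow> ('a \<Rightarrow> ('i \<Rightarrow> int) set) \<Rightarrow> bool" where
  "root_system rho C R \<longleftrightarrow> cartan_scheme rho C
     \<and> (\<forall>a. R a = pos_roots R a \<union> (\<lambda>v. (\<lambda>k. - v k)) ` pos_roots R a)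
     \<and> (\<forall>a i. R a \<inter> {v. \<exists>c::int. v = (\<lambda>k. c * alpha i k)} = {alpha i, (\<lambda>k. - alpha i k)})
     \<and> (\<forall>a i. sigma C a i ` R a = R (rho i a))
     \<and> (\<forall>a i j. i \<noteq> j \<and> finite (rank2_roots R a i j) \<longrightarrow>
          ((rho i \<circ> rho j) ^^ card (rank2_roots R a i j)) a = a)"

definition finite_root_system :: "('a \<Rightarrow> ('i \<Rightarrow> int) set) \<Rightarrow> bool" where
  "finite_root_system R \<longleftrightarrow> (\<forall>a. finite (R a))"

end

theory Submission
  imports Defs
begin


definition comb3 :: "'i \<Rightarrow> 'i \<Rightarrow> 'i \<Rightarrow> int \<Rightarrow> int \<Rightarrow> int \<Rightarrow> ('i \<Rightarrow> int)" where
  "comb3 u1 u2 u3 a1 a2 a3 = (\<lambda>k. a1 * alpha u1 k + a2 * alpha u2 k + a3 * alpha u3 k)"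

definition comb2 :: "'i \<Rightarrow> 'i \<Rightarrow> int \<Rightarrow> int \<Rightarrow> ('i \<Rightarrow> int)" where
  "comb2 u1 u2 a1 a2 = (\<lambda>k. a1 * alpha u1 k + a2 * alpha u2 k)"

lemma sum_alpha: "(\<Sum>j\<in>(UNIV::'i::finite set). f j * alpha u j) = f u"
  unfolding alpha_def by (simp add: if_distrib cong: if_cong)

lemma sum_comb3: "(\<Sum>j\<in>(UNIV::'i::finite set). f j * comb3 u1 u2 u3 a1 a2 a3 j) = a1 * f u1 + a2 * f u2 + a3 * f u3"
proof -
  have "(\<Sum>j\<in>(UNIV::'i set). f j * comb3 u1 u2 u3 a1 a2 a3 j) = (\<Sum>j\<in>UNIV. a1 * (f j * alpha u1 j) + a2 * (f j * alpha u2 j) + a3 * (f j * alpha u3 j))"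
    by (rule sum.cong) (auto simp: comb3_def algebra_simps)
  also have "\<dots> = a1 * f u1 + a2 * f u2 + a3 * f u3"
    by (simp add: sum.distrib sum_distrib_left[symmetric] sum_alpha)
  finally show ?thesis .
qed

lemma sum_comb2: "(\<Sum>j\<in>(UNIV::'i::finite set). f j * comb2 u1 u2 a1 a2 j) = a1 * f u1 + a2 * f u2"
proof -
  have "(\<Sum>j\<in>(UNIV::'i set). f j * comb2 u1 u2 a1 a2 j) = (\<Sum>j\<in>UNIV. a1 * (f j * alpha u1 j) + a2 * (f j * alpha u2 j))"
    by (rule sum.cong) (auto simp: comb2_def algebra_simps)
  also have "\<dots> = a1 * f u1 + a2 * f u2"
    by (simp add: sum.distrib sum_distrib_left[symmetric] sum_alpha)
  finally show ?thesis .
qed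

lemma sigma_comb3_1: "u1 \<noteq> u2 \<Longrightarrow> u1 \<noteq> u3 \<Longrightarrow> u2 \<noteq> u3 \<Longrightarrow>
  sigma C x u1 (comb3 u1 u2 u3 a1 a2 a3) = comb3 u1 u2 u3 (a1 - (a1 * C x u1 u1 + a2 * C x u1 u2 + a3 * C x u1 u3)) a2 a3"
  unfolding sigma_def sum_comb3 by (rule ext) (auto simp: comb3_def alpha_def)
lemma sigma_comb3_2: "u1 \<noteq> u2 \<Longrightarrow> u1 \<noteq> u3 \<Longrightarrow> u2 \<noteq> u3 \<Longrightarrow>
  sigma C x u2 (comb3 u1 u2 u3 a1 a2 a3) = comb3 u1 u2 u3 a1 (a2 - (a1 * C x u2 u1 + a2 * C x u2 u2 + a3 * C x u2 u3)) a3"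
  unfolding sigma_def sum_comb3 by (rule ext) (auto simp: comb3_def alpha_def)
lemma sigma_comb3_3: "u1 \<noteq> u2 \<Longrightarrow> u1 \<noteq> u3 \<Longrightarrow> u2 \<noteq> u3 \<Longrightarrow>
  sigma C x u3 (comb3 u1 u2 u3 a1 a2 a3) = comb3 u1 u2 u3 a1 a2 (a3 - (a1 * C x u3 u1 + a2 * C x u3 u2 + a3 * C x u3 u3))"
  unfolding sigma_def sum_comb3 by (rule ext) (auto simp: comb3_def alpha_def)
lemma sigma_comb2_1: "u1 \<noteq> u2 \<Longrightarrow>
  sigma C x u1 (comb2 u1 u2 a1 a2) = comb2 u1 u2 (a1 - (a1 * C x u1 u1 + a2 * C x u1 u2)) a2"
  unfolding sigma_def sum_comb2 by (rule ext) (auto simp: comb2_def alpha_def)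
lemma sigma_comb2_2: "u1 \<noteq> u2 \<Longrightarrow>
  sigma C x u2 (comb2 u1 u2 a1 a2) = comb2 u1 u2 a1 (a2 - (a1 * C x u2 u1 + a2 * C x u2 u2))"
  unfolding sigma_def sum_comb2 by (rule ext) (auto simp: comb2_def alpha_def)

lemma comb3_eval: "u1 \<noteq> u2 \<Longrightarrow> u1 \<noteq> u3 \<Longrightarrow> u2 \<noteq> u3 \<Longrightarrow>
  comb3 u1 u2 u3 a1 a2 a3 u1 = a1 \<and> comb3 u1 u2 u3 a1 a2 a3 u2 = a2 \<and> comb3 u1 u2 u3 a1 a2 a3 u3 = a3"
  by (auto simp: comb3_def alpha_def)
lemma comb2_eval: "u1 \<noteq> u2 \<Longrightarrow> comb2 u1 u2 a1 a2 u1 = a1 \<and> comb2 u1 u2 a1 a2 u2 = a2"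
  by (auto simp: comb2_def alpha_def)

lemma sigma_row: "(\<And>k. C x m k = C y m k) \<Longrightarrow> sigma C x m = sigma C y m"
  unfolding sigma_def by (intro ext) simp

locale rs =
  fixes rho :: "'i::finite \<Rightarrow> 'a \<Rightarrow> 'a" and C :: "'a \<Rightarrow> 'i \<Rightarrow> 'i \<Rightarrow> int"
    and R :: "'a \<Rightarrow> ('i \<Rightarrow> int) set"
  assumes RS: "root_system rho C R" and FIN: "finite_root_system R"
begin

lemma cs: "cartan_scheme rho C" using RS unfolding root_system_def by (rule conjunct1)
lemma invol[simp]: "rho i (rho i a) = a" using cs unfolding cartan_scheme_def by (elim conjE) (erule allE)+
lemma C2: "C (rho i a) i k = C a i k" using cs unfolding cartan_scheme_def
  by (elim conjE) (drule spec[of _ a], drule spec[of _ i], drule spec[of _ k], rule sym)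
lemma gcm_a: "gcm (C a)" using cs unfolding cartan_scheme_def by (elim conjE) (erule allE)
lemma gcm_diag[simp]: "C a i i = 2" using gcm_a[of a] unfolding gcm_def by blast
lemma gcm_le: "j \<noteq> k \<Longrightarrow> C a j k \<le> 0" using gcm_a[of a] unfolding gcm_def by blast
lemma gcm_sym0: "C a i j = 0 \<Longrightarrow> C a j i = 0" using gcm_a[of a] unfolding gcm_def by blast
lemma R3: "v \<in> R a \<Longrightarrow> sigma C a i v \<in> R (rho i a)"
proof -
  assume "v \<in> R a"
  moreover have "\<forall>a i. sigma C a i ` R a = R (rho i a)" using RS unfolding root_system_def by (elim conjE)
  ultimately show ?thesis by blast
qed
lemma R2set: "R a \<inter> {v. \<exists>c::int. v = (\<lambda>k. c * alpha i k)} = {alpha i, (\<lambda>k. - alpha i k)}"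
proof -
  have "\<forall>a i. R a \<inter> {v. \<exists>c::int. v = (\<lambda>k. c * alpha i k)} = {alpha i, (\<lambda>k. - alpha i k)}"
    using RS unfolding root_system_def by (elim conjE)
  then show ?thesis by blast
qed
lemma alpha_in: "alpha i \<in> R a" using R2set[of a i] by blast
lemma R2c: assumes "(\<lambda>k. c * alpha i k) \<in> R a" shows "c = 1 \<or> c = -1"
proof -
  from assms R2set[of a i] have "(\<lambda>k. c * alpha i k) \<in> {alpha i, (\<lambda>k. - alpha i k)}" by blast
  then have "(\<lambda>k. c * alpha i k) i = alpha i i \<or> (\<lambda>k. c * alpha i k) i = - alpha i i"
    by (metis insertE singletonD)
  then show ?thesis by (simp add: alpha_def)
qed
lemma R1: assumes "v \<in> R a" shows "(\<forall>k. 0 \<le> v k) \<or> (\<forall>k. v k \<le> 0)"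
proof -
  have "\<forall>a. R a = pos_roots R a \<union> (\<lambda>v. (\<lambda>k. - v k)) ` pos_roots R a"
    using RS unfolding root_system_def by (elim conjE)
  then have "v \<in> pos_roots R a \<union> (\<lambda>v. (\<lambda>k. - v k)) ` pos_roots R a" using assms by blast
  then show ?thesis unfolding pos_roots_def by auto
qed
lemma R4: assumes "i \<noteq> j" "finite (rank2_roots R a i j)"
  shows "((rho i \<circ> rho j) ^^ card (rank2_roots R a i j)) a = a"
proof -
  have "\<forall>a i j. i \<noteq> j \<and> finite (rank2_roots R a i j) \<longrightarrow>
          ((rho i \<circ> rho j) ^^ card (rank2_roots R a i j)) a = a"
    using RS unfolding root_system_def by (elim conjE)
  with assms show ?thesis by blast
qed
lemma finR: "finite (R a)" using FIN unfolding finite_root_system_def by blast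
lemma bounded: "\<exists>M. \<forall>v\<in>R a. \<bar>v k\<bar> \<le> M"
proof -
  have "finite ((\<lambda>v. \<bar>v k\<bar>) ` R a)" using finR by simp
  then obtain M where "\<forall>x\<in>(\<lambda>v. \<bar>v k\<bar>) ` R a. x \<le> M" using finite_nat_set_iff_bounded_le
    by (metis Max_ge)
  then show ?thesis by blast
qed
lemma unbounded_False: assumes "\<And>n::nat. \<exists>v\<in>R a. int n \<le> \<bar>v k\<bar>" shows False
proof -
  obtain M where M: "\<forall>v\<in>R a. \<bar>v k\<bar> \<le> M" using bounded by blast
  obtain v where "v \<in> R a" "int (nat M + 1) \<le> \<bar>v k\<bar>" using assms by blast
  from M \<open>v \<in> R a\<close> have "\<bar>v k\<bar> \<le> M" by blast
  with \<open>int (nat M + 1) \<le> \<bar>v k\<bar>\<close> show False by linarith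
qed

end


lemma mul_ge: fixes c y :: int assumes "1 \<le> c" "0 \<le> y" shows "y \<le> c * y"
  using mult_right_mono[OF assms] by simp

lemma arith1: fixes X Y X' Z Y' Z' x y z :: int
  assumes "1 \<le> X" "1 \<le> Y" "1 \<le> X'" "1 \<le> Z" "1 \<le> Y'" "1 \<le> Z'"
    "0 \<le> x" "x \<le> y" "y \<le> z" "x < z"
  shows "0 \<le> -x + X*y + Y*z \<and> -x + X*y + Y*z \<le> -y + X'*(-x + X*y + Y*z) + Z*z
     \<and> -y + X'*(-x + X*y + Y*z) + Z*z \<le> -z + Y'*(-x + X*y + Y*z) + Z'*(-y + X'*(-x + X*y + Y*z) + Z*z)
     \<and> -x + X*y + Y*z < -z + Y'*(-x + X*y + Y*z) + Z'*(-y + X'*(-x + X*y + Y*z) + Z*z)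
     \<and> z < -z + Y'*(-x + X*y + Y*z) + Z'*(-y + X'*(-x + X*y + Y*z) + Z*z)"
proof -
  define x' where "x' = -x + X*y + Y*z"
  define y' where "y' = -y + X'*x' + Z*z"
  define z' where "z' = -z + Y'*x' + Z'*y'"
  have "y \<le> X*y" "z \<le> Y*z" using mul_ge assms by auto
  then have x1: "z \<le> x'" "y < x'" unfolding x'_def using assms by linarith+
  then have "x' \<le> X'*x'" "z \<le> Z*z" using mul_ge assms by auto
  then have y1: "x' \<le> y'" "y' \<ge> -y + x' + z" unfolding y'_def using assms x1 by linarith+
  then have "x' \<le> Y'*x'" "y' \<le> Z'*y'" using mul_ge assms x1 by auto
  then have "z' \<ge> -z + x' + y'" unfolding z'_def by linarith
  then show ?thesis using x1 y1 assms
    unfolding x'_def[symmetric] y'_def[symmetric] z'_def[symmetric] by linarith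
qed

context rs begin

lemma g_in: assumes "rho i a = b" "rho j a = b" "rho l a = a" "v \<in> R a"
  shows "sigma C a l (sigma C a j (sigma C a i v)) \<in> R a"
proof -
  have 1: "sigma C a i v \<in> R b" using R3[OF assms(4), of i] assms(1) by simp
  have "sigma C b j = sigma C a j" by (rule sigma_row) (metis C2 assms(2))
  moreover have "sigma C b j (sigma C a i v) \<in> R a" using R3[OF 1, of j] assms(2) by (metis invol)
  ultimately have "sigma C a j (sigma C a i v) \<in> R a" by simp
  from R3[OF this, of l] show ?thesis using assms(3) by simp
qed

lemma part1: assumes "i \<noteq> j" "rho i a = b" "rho j a = b" "b \<noteq> a" "rho l a = a"
  shows "C a i j * C a i l * C a j l = 0"
proof (rule ccontr)
  assume nz: "C a i j * C a i l * C a j l \<noteq> 0"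
  have li: "l \<noteq> i" using assms by metis
  have lj: "l \<noteq> j" using assms by metis
  have nz1: "C a i j \<noteq> 0" "C a i l \<noteq> 0" "C a j l \<noteq> 0" using nz by auto
  then have nz2: "C a j i \<noteq> 0" "C a l i \<noteq> 0" "C a l j \<noteq> 0" using gcm_sym0 by blast+
  have le: "C a i j \<le> 0" "C a i l \<le> 0" "C a j l \<le> 0" "C a j i \<le> 0" "C a l i \<le> 0" "C a l j \<le> 0"
    using gcm_le assms(1) li lj by auto
  define X where "X = - C a i j"
  define Y where "Y = - C a i l"
  define X' where "X' = - C a j i"
  define Z where "Z = - C a j l"
  define Y' where "Y' = - C a l i"
  define Z' where "Z' = - C a l j"
  have ge: "1 \<le> X" "1 \<le> Y" "1 \<le> X'" "1 \<le> Z" "1 \<le> Y'" "1 \<le> Z'"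
    unfolding X_def Y_def X'_def Z_def Y'_def Z'_def using nz1 nz2 le by auto
  have d: "i \<noteq> j" "i \<noteq> l" "j \<noteq> l" using assms(1) li lj by auto
  have step: "sigma C a l (sigma C a j (sigma C a i (comb3 i j l x y z))) =
     comb3 i j l (-x + X*y + Y*z) (-y + X'*(-x + X*y + Y*z) + Z*z)
       (-z + Y'*(-x + X*y + Y*z) + Z'*(-y + X'*(-x + X*y + Y*z) + Z*z))" for x y z
    using d unfolding X_def Y_def X'_def Z_def Y'_def Z'_def
    by (simp add: sigma_comb3_1 sigma_comb3_2 sigma_comb3_3 algebra_simps)
  have inv: "\<exists>x y z. comb3 i j l x y z \<in> R a \<and> 0 \<le> x \<and> x \<le> y \<and> y \<le> z \<and> x < z \<and> int n + 1 \<le> z" for n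
  proof (induction n)
    case 0
    have "comb3 i j l 0 0 1 = alpha l" by (simp add: comb3_def)
    then show ?case using alpha_in[of l a] by (intro exI[of _ 0] exI[of _ 1]) auto
  next
    case (Suc n)
    then obtain x y z where H: "comb3 i j l x y z \<in> R a" "0 \<le> x" "x \<le> y" "y \<le> z" "x < z" "int n + 1 \<le> z"
      by blast
    have "sigma C a l (sigma C a j (sigma C a i (comb3 i j l x y z))) \<in> R a"
      using g_in[OF assms(2,3,5) H(1)] .
    then show ?case unfolding step using arith1[OF ge H(2-5)] H(6)
      by (intro exI) auto
  qed
  show False
  proof (rule unbounded_False[of a l])
    fix n :: nat
    obtain x y z where H: "comb3 i j l x y z \<in> R a" "0 \<le> x" "x \<le> y" "y \<le> z" "int n + 1 \<le> z"
      using inv[of n] by blast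
    have "comb3 i j l x y z l = z" using comb3_eval[OF d] by blast
    then show "\<exists>v\<in>R a. int n \<le> \<bar>v l\<bar>" using H by (intro bexI[OF _ H(1)]) auto
  qed
qed

end


context rs begin

lemma sign2: assumes "comb2 i l P Q \<in> R x" "i \<noteq> l"
  shows "(0 \<le> P \<and> 0 \<le> Q) \<or> (P \<le> 0 \<and> Q \<le> 0)"
proof -
  have e: "comb2 i l P Q i = P" "comb2 i l P Q l = Q" using comb2_eval[OF assms(2)] by auto
  from R1[OF assms(1)] show ?thesis
  proof
    assume "\<forall>k. 0 \<le> comb2 i l P Q k" then show ?thesis using e by metis
  next
    assume "\<forall>k. comb2 i l P Q k \<le> 0" then show ?thesis using e by metis
  qed
qed

lemma single1: assumes "comb2 i l P 0 \<in> R x" "0 \<le> P" shows "P = 1"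
proof -
  have "comb2 i l P 0 = (\<lambda>k. P * alpha i k)" by (simp add: comb2_def)
  with R2c[of P i x] assms show ?thesis by auto
qed
lemma single2: assumes "comb2 i l 0 Q \<in> R x" "0 \<le> Q" shows "Q = 1"
proof -
  have "comb2 i l 0 Q = (\<lambda>k. Q * alpha l k)" by (simp add: comb2_def)
  with R2c[of Q l x] assms show ?thesis by auto
qed

lemma alpha_c1: "alpha i = comb2 i l 1 0" by (simp add: comb2_def)
lemma alpha_c2: "alpha l = comb2 i l 0 1" by (simp add: comb2_def)

lemma rank2_mem: "v \<in> rank2_roots R a i l \<longleftrightarrow> (\<exists>P Q. v = comb2 i l P Q \<and> 0 \<le> P \<and> 0 \<le> Q \<and> v \<in> R a)"
proof
  assume "v \<in> rank2_roots R a i l"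
  then obtain p q :: nat where "v = comb2 i l (int p) (int q)" "v \<in> R a"
    unfolding rank2_roots_def comb2_def by blast
  then show "\<exists>P Q. v = comb2 i l P Q \<and> 0 \<le> P \<and> 0 \<le> Q \<and> v \<in> R a" by fastforce
next
  assume "\<exists>P Q. v = comb2 i l P Q \<and> 0 \<le> P \<and> 0 \<le> Q \<and> v \<in> R a"
  then obtain P Q where H: "v = comb2 i l P Q" "0 \<le> P" "0 \<le> Q" "v \<in> R a" by blast
  then have "v = (\<lambda>k. int (nat P) * alpha i k + int (nat Q) * alpha l k)" by (simp add: comb2_def)
  then show "v \<in> rank2_roots R a i l" unfolding rank2_roots_def using H(4) by blast
qed

lemma rank2_zero: assumes "i \<noteq> l" "C a i l = 0"
  shows "rank2_roots R a i l = {comb2 i l 1 0, comb2 i l 0 1}"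
proof
  have "comb2 i l 1 0 \<in> rank2_roots R a i l" unfolding rank2_mem
    by (intro exI[of _ 1] exI[of _ 0]) (simp add: alpha_c1[symmetric] alpha_in)
  moreover have "comb2 i l 0 1 \<in> rank2_roots R a i l" unfolding rank2_mem
    by (intro exI[of _ 0] exI[of _ 1]) (simp add: alpha_c2[symmetric] alpha_in)
  ultimately show "{comb2 i l 1 0, comb2 i l 0 1} \<subseteq> rank2_roots R a i l" by blast
next
  show "rank2_roots R a i l \<subseteq> {comb2 i l 1 0, comb2 i l 0 1}"
  proof
    fix v assume "v \<in> rank2_roots R a i l"
    then obtain P Q where H: "v = comb2 i l P Q" "0 \<le> P" "0 \<le> Q" "v \<in> R a" unfolding rank2_mem by blast
    show "v \<in> {comb2 i l 1 0, comb2 i l 0 1}"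
    proof (cases "P = 0")
      case True then show ?thesis using single2[of i l Q a] H by auto
    next
      case F1: False
      show ?thesis
      proof (cases "Q = 0")
        case True then show ?thesis using single1[of i l P a] H by auto
      next
        case False
        have "sigma C a i v = comb2 i l (-P) Q" using H(1) assms
          by (simp add: sigma_comb2_1)
        moreover have "sigma C a i v \<in> R (rho i a)" using R3 H(4) by blast
        ultimately have "comb2 i l (-P) Q \<in> R (rho i a)" by simp
        from sign2[OF this assms(1)] show ?thesis using F1 False H by auto
      qed
    qed
  qed
qed

lemma card2: assumes "i \<noteq> l" shows "card {comb2 i l 1 0, comb2 i l 0 1} = 2"
proof -
  have "comb2 i l 1 0 \<noteq> comb2 i l 0 1"
  proof
    assume "comb2 i l 1 0 = comb2 i l 0 1"
    then have "comb2 i l 1 0 i = comb2 i l 0 1 i" by simp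
    then show False using comb2_eval[OF assms] by simp
  qed
  then show ?thesis by simp
qed

lemma zero_fix: assumes "i \<noteq> l" "C a i l = 0" "rho i a = b" "rho l a = a"
  shows "rho l b = b"
proof -
  have c: "card (rank2_roots R a i l) = 2" using rank2_zero[OF assms(1,2)] card2[OF assms(1)] by simp
  have "finite (rank2_roots R a i l)" using rank2_zero[OF assms(1,2)] by simp
  from R4[OF assms(1) this] c have "((rho i \<circ> rho l) ^^ 2) a = a" by simp
  then have "rho i (rho l (rho i (rho l a))) = a" by (simp add: numeral_2_eq_2)
  then have "rho i (rho l b) = a" using assms by simp
  then have "rho l b = rho i a" by (metis invol)
  then show ?thesis using assms by simp
qed

lemma transv: assumes "i \<noteq> l" "C a i l = 0" "rho i a = b" "rho l a = a"
  shows "C a l n = C b l n"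
proof -
  have lb: "rho l b = b" using zero_fix[OF assms] .
  have rowi: "C b i k = C a i k" for k using C2 assms(3) by metis
  have Cbil: "C b i l = 0" using rowi assms(2) by simp
  have Cali: "C a l i = 0" "C b l i = 0" using gcm_sym0 assms(2) Cbil by auto
  consider "n = l" | "n = i" | "n \<noteq> l" "n \<noteq> i" by blast
  then show ?thesis
  proof cases
    case 1 then show ?thesis by simp
  next
    case 2 then show ?thesis using Cali by simp
  next
    case 3
    define \<delta> where "\<delta> = C a l n - C b l n"
    have d: "n \<noteq> i" "n \<noteq> l" "i \<noteq> l" using 3 assms(1) by auto
    have step: "sigma C b i (sigma C b l (sigma C a i (sigma C a l (comb3 n i l 1 0 t)))) = comb3 n i l 1 0 (t + \<delta>)" for t
      using d Cali Cbil assms(2) rowi[of n] unfolding \<delta>_def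
      by (simp add: sigma_comb3_1 sigma_comb3_2 sigma_comb3_3 algebra_simps)
    have memb: "sigma C b i (sigma C b l (sigma C a i (sigma C a l v))) \<in> R a" if "v \<in> R a" for v
    proof -
      have "sigma C a l v \<in> R a" using R3[OF that, of l] assms(4) by simp
      then have "sigma C a i (sigma C a l v) \<in> R b" using R3 assms(3) by metis
      then have "sigma C b l (sigma C a i (sigma C a l v)) \<in> R b" using R3 lb by metis
      then show ?thesis using R3[of _ b i] assms(3) by (metis invol)
    qed
    have inv: "comb3 n i l 1 0 (int k * \<delta>) \<in> R a" for k
    proof (induction k)
      case 0
      have "comb3 n i l 1 0 0 = alpha n" by (simp add: comb3_def)
      then show ?case using alpha_in by simp
    next
      case (Suc k)
      from memb[OF Suc] show ?case unfolding step by (simp add: algebra_simps)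
    qed
    show ?thesis
    proof (rule ccontr)
      assume "C a l n \<noteq> C b l n"
      then have "\<delta> \<noteq> 0" unfolding \<delta>_def by simp
      show False
      proof (rule unbounded_False[of a l])
        fix k :: nat
        have "comb3 n i l 1 0 (int k * \<delta>) l = int k * \<delta>" using comb3_eval[OF d(1) _ d(3)] d by blast
        moreover have "int k \<le> \<bar>int k * \<delta>\<bar>"
        proof -
          have "1 \<le> \<bar>\<delta>\<bar>" using \<open>\<delta> \<noteq> 0\<close> by simp
          from mul_ge[OF this, of "int k"] show ?thesis by (simp add: abs_mult mult.commute)
        qed
        ultimately show "\<exists>v\<in>R a. int k \<le> \<bar>v l\<bar>" using inv[of k] by metis
      qed
    qed
  qed
qed

end


context rs begin

lemma rank2_m1: assumes "i \<noteq> l" "C a i l = -1" "C a l i = -1" "rho i a = b"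
  shows "rank2_roots R a i l = {comb2 i l 1 0, comb2 i l 0 1, comb2 i l 1 1}"
proof
  have "comb2 i l 1 0 \<in> rank2_roots R a i l" unfolding rank2_mem
    by (intro exI[of _ 1] exI[of _ 0]) (simp add: alpha_c1[symmetric] alpha_in)
  moreover have "comb2 i l 0 1 \<in> rank2_roots R a i l" unfolding rank2_mem
    by (intro exI[of _ 0] exI[of _ 1]) (simp add: alpha_c2[symmetric] alpha_in)
  moreover have "comb2 i l 1 1 \<in> R a"
  proof -
    have "C b i l = -1" using C2 assms by metis
    then have "sigma C b i (comb2 i l 0 1) = comb2 i l 1 1" using assms(1) by (simp add: sigma_comb2_1)
    moreover have "sigma C b i (comb2 i l 0 1) \<in> R (rho i b)"
      using R3 alpha_in[of l b] alpha_c2[of l i] by metis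
    ultimately show ?thesis using assms(4) by (metis invol)
  qed
  then have "comb2 i l 1 1 \<in> rank2_roots R a i l" unfolding rank2_mem
    by (intro exI[of _ 1] exI[of _ 1]) simp
  ultimately show "{comb2 i l 1 0, comb2 i l 0 1, comb2 i l 1 1} \<subseteq> rank2_roots R a i l" by blast
next
  show "rank2_roots R a i l \<subseteq> {comb2 i l 1 0, comb2 i l 0 1, comb2 i l 1 1}"
  proof
    fix v assume "v \<in> rank2_roots R a i l"
    then obtain P Q where H: "v = comb2 i l P Q" "0 \<le> P" "0 \<le> Q" "v \<in> R a" unfolding rank2_mem by blast
    show "v \<in> {comb2 i l 1 0, comb2 i l 0 1, comb2 i l 1 1}"
    proof (cases "P = 0")
      case True then show ?thesis using single2[of i l Q a] H by auto
    next
      case F1: False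
      show ?thesis
      proof (cases "Q = 0")
        case True then show ?thesis using single1[of i l P a] H by auto
      next
        case False
        have s1: "sigma C a l v = comb2 i l P (P - Q)" using H(1) assms
          by (simp add: sigma_comb2_2)
        moreover have "sigma C a l v \<in> R (rho l a)" using R3 H(4) by blast
        ultimately have m1: "comb2 i l P (P - Q) \<in> R (rho l a)" by simp
        have "sigma C a i v = comb2 i l (Q - P) Q" using H(1) assms
          by (simp add: sigma_comb2_1)
        moreover have "sigma C a i v \<in> R (rho i a)" using R3 H(4) by blast
        ultimately have m2: "comb2 i l (Q - P) Q \<in> R (rho i a)" by simp
        have "P = Q" using sign2[OF m1 assms(1)] sign2[OF m2 assms(1)] F1 False H by auto
        then have "comb2 i l P 0 \<in> R (rho l a)" using m1 by simp
        from single1[OF this] have "P = 1" using H by simp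
        then show ?thesis using H \<open>P = Q\<close> by simp
      qed
    qed
  qed
qed

lemma card3: assumes "i \<noteq> l" shows "card {comb2 i l 1 0, comb2 i l 0 1, comb2 i l 1 1} = 3"
proof -
  have e: "x = x' \<and> y = y'" if h: "comb2 i l x y = comb2 i l x' y'" for x y x' y'
  proof -
    have "comb2 i l x y i = comb2 i l x' y' i" "comb2 i l x y l = comb2 i l x' y' l" using h by simp_all
    then show ?thesis using comb2_eval[OF assms] by simp
  qed
  have "comb2 i l 1 0 \<noteq> comb2 i l 0 1" using e[of 1 0 0 1] by auto
  moreover have "comb2 i l 1 0 \<noteq> comb2 i l 1 1" using e[of 1 0 1 1] by auto
  moreover have "comb2 i l 0 1 \<noteq> comb2 i l 1 1" using e[of 0 1 1 1] by auto
  ultimately show ?thesis by simp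
qed

lemma chain3: assumes "i \<noteq> l" "C a i l = -1" "C a l i = -1" "rho i a = b" "rho l a = a"
  shows "rho i (rho l b) = rho l b"
proof -
  have c: "card (rank2_roots R a i l) = 3" using rank2_m1[OF assms(1-4)] card3[OF assms(1)] by simp
  have "finite (rank2_roots R a i l)" using rank2_m1[OF assms(1-4)] by simp
  from R4[OF assms(1) this] c have "((rho i \<circ> rho l) ^^ 3) a = a" by simp
  then have "rho i (rho l (rho i (rho l (rho i (rho l a))))) = a" by (simp add: numeral_3_eq_3)
  then have "rho i (rho l (rho i (rho l b))) = a" using assms by simp
  then have "rho l (rho i (rho l b)) = b" using assms(4) by (metis invol)
  then show ?thesis by (metis invol)
qed

end


lemma mul_nn: fixes a b :: int shows "0 \<le> a \<Longrightarrow> 0 \<le> b \<Longrightarrow> 0 \<le> a * b" by simp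

lemma arith2: fixes p q r s x y z :: int
  assumes "1 \<le> p" "1 \<le> q" "1 \<le> r" "1 \<le> s" "2 \<le> p*r" "2 \<le> q*s"
    "0 \<le> x" "0 \<le> y" "0 \<le> z" "2*x \<le> p*z" "2*y \<le> q*z" "2*x < p*z \<or> 2*y < q*z"
  shows "0 \<le> -x + p*z \<and> 0 \<le> -y + q*z \<and> z < -z + r*(-x + p*z) + s*(-y + q*z)
    \<and> 0 \<le> -x + p*z \<and> 2*(-x + p*z) \<le> p*(-z + r*(-x + p*z) + s*(-y + q*z))
    \<and> 2*(-y + q*z) \<le> q*(-z + r*(-x + p*z) + s*(-y + q*z))
    \<and> (2*(-x + p*z) < p*(-z + r*(-x + p*z) + s*(-y + q*z)) \<or> 2*(-y + q*z) < q*(-z + r*(-x + p*z) + s*(-y + q*z)))"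
proof -
  define x' where "x' = -x + p*z"
  define y' where "y' = -y + q*z"
  define z' where "z' = -z + r*x' + s*y'"
  define A where "A = p*z - 2*x"
  define B where "B = q*z - 2*y"
  have A0: "0 \<le> A" "0 \<le> B" "0 < A \<or> 0 < B" unfolding A_def B_def using assms by auto
  have AB: "0 < A + B" using A0 by linarith
  have x'0: "0 \<le> x'" "0 \<le> y'" unfolding x'_def y'_def using assms by auto
  have id1: "2*(r*x' + s*y') = (r*p)*z + r*A + (s*q)*z + s*B"
    unfolding x'_def y'_def A_def B_def by (simp add: algebra_simps)
  have f1: "2*z \<le> (r*p)*z" using mult_right_mono[OF _ assms(9), of 2 "r*p"] assms(5) by (simp add: mult.commute)
  have f2: "2*z \<le> (s*q)*z" using mult_right_mono[OF _ assms(9), of 2 "s*q"] assms(6) by (simp add: mult.commute)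
  have f3: "A \<le> r*A" "B \<le> s*B" using mul_ge A0 assms by auto
  have zz: "z < z'" unfolding z'_def using id1 f1 f2 f3 A0(1,2) AB by (smt (verit))
  have idA: "2*(p*z' - 2*x') = 2*((p*r - 2)*x') + p*((s*q - 2)*z) + (p*s)*B"
    unfolding z'_def x'_def y'_def B_def by (simp add: algebra_simps)
  have idB: "2*(q*z' - 2*y') = 2*((q*s - 2)*y') + q*((r*p - 2)*z) + (q*r)*A"
    unfolding z'_def x'_def y'_def A_def by (simp add: algebra_simps)
  have g1: "0 \<le> (p*r - 2)*x'" "0 \<le> (q*s - 2)*y'" using x'0 assms by auto
  have g2: "0 \<le> p*((s*q - 2)*z)" "0 \<le> q*((r*p - 2)*z)" using assms by (auto simp: mult.commute)
  have "s \<le> p*s" "r \<le> q*r" using assms(1,2,3,4) mul_ge[of p s] mul_ge[of q r] by auto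
  then have "1 \<le> p*s" "1 \<le> q*r" using assms(3,4) by linarith+
  then have g3: "B \<le> (p*s)*B" "A \<le> (q*r)*A" using mul_ge A0 by auto
  have "2*x' \<le> p*z'" "2*y' \<le> q*z'" "0 < (p*z' - 2*x') + (q*z' - 2*y')"
    using idA idB g1 g2 g3 A0(1,2) AB by (smt (verit))+
  then have "2*x' \<le> p*z'" "2*y' \<le> q*z'" "2*x' < p*z' \<or> 2*y' < q*z'" by linarith+
  then show ?thesis using x'0 zz unfolding x'_def y'_def z'_def by simp
qed

context rs begin

lemma growth2: assumes "i \<noteq> j" "i \<noteq> l" "j \<noteq> l" "rho i a = b" "rho j a = b" "rho l a = a"
  "C a i j = 0" "C a i l \<le> -1" "C a l i \<le> -1" "C a j l \<le> -1" "C a l j \<le> -1"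
  "2 \<le> C a i l * C a l i" "2 \<le> C a j l * C a l j"
  shows False
proof -
  define p where "p = - C a i l"
  define r where "r = - C a l i"
  define q where "q = - C a j l"
  define s where "s = - C a l j"
  have ge: "1 \<le> p" "1 \<le> q" "1 \<le> r" "1 \<le> s" "2 \<le> p*r" "2 \<le> q*s"
    unfolding p_def q_def r_def s_def using assms by auto
  have Cji: "C a j i = 0" using gcm_sym0 assms(7) by blast
  have step: "sigma C a l (sigma C a j (sigma C a i (comb3 i j l x y z))) =
     comb3 i j l (-x + p*z) (-y + q*z) (-z + r*(-x + p*z) + s*(-y + q*z))" for x y z
    using assms(1-3) assms(7) Cji unfolding p_def q_def r_def s_def
    by (simp add: sigma_comb3_1 sigma_comb3_2 sigma_comb3_3 algebra_simps)
  have inv: "\<exists>x y z. comb3 i j l x y z \<in> R a \<and> 0 \<le> x \<and> 0 \<le> y \<and> 0 \<le> z \<and> 2*x \<le> p*z \<and> 2*y \<le> q*z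
     \<and> (2*x < p*z \<or> 2*y < q*z) \<and> int n + 1 \<le> z" for n
  proof (induction n)
    case 0
    have "comb3 i j l 0 0 1 = alpha l" by (simp add: comb3_def)
    then show ?case using alpha_in[of l a] ge
      apply -
      apply (rule exI[of _ 0], rule exI[of _ 0], rule exI[of _ 1])
      by simp
  next
    case (Suc n)
    then obtain x y z where H: "comb3 i j l x y z \<in> R a" "0 \<le> x" "0 \<le> y" "0 \<le> z" "2*x \<le> p*z" "2*y \<le> q*z"
       "2*x < p*z \<or> 2*y < q*z" "int n + 1 \<le> z"
      by blast
    have "sigma C a l (sigma C a j (sigma C a i (comb3 i j l x y z))) \<in> R a"
      using g_in[OF assms(4,5,6) H(1)] .
    then have M: "comb3 i j l (-x + p*z) (-y + q*z) (-z + r*(-x + p*z) + s*(-y + q*z)) \<in> R a"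
      unfolding step .
    note A = arith2[OF ge H(2-7)]
    have zz: "int (Suc n) + 1 \<le> -z + r*(-x + p*z) + s*(-y + q*z)" using A H(8) by linarith
    have z0: "0 \<le> -z + r*(-x + p*z) + s*(-y + q*z)" using A H(4) by linarith
    show ?case
      apply (rule exI[of _ "-x + p*z"], rule exI[of _ "-y + q*z"], rule exI[of _ "-z + r*(-x + p*z) + s*(-y + q*z)"])
      apply (insert M zz z0 A)
      apply (elim conjE)
      apply (intro conjI)
      by assumption+
  qed
  show False
  proof (rule unbounded_False[of a l])
    fix n :: nat
    obtain x y z where H: "comb3 i j l x y z \<in> R a" "int n + 1 \<le> z"
      using inv[of n] by blast
    have "comb3 i j l x y z l = z" using comb3_eval[OF assms(1-3)] by blast
    then show "\<exists>v\<in>R a. int n \<le> \<bar>v l\<bar>" using H by (intro bexI[OF _ H(1)]) auto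
  qed
qed

end

lemma prod_ge2: fixes u v :: int assumes "u \<le> -1" "v \<le> -1" "\<not> (u = -1 \<and> v = -1)"
  shows "2 \<le> u * v"
proof -
  have "0 \<le> (u+1)*(v+1)" using assms by (intro mult_nonpos_nonpos) auto
  moreover have "u*v = (u+1)*(v+1) - u - v - 1" by (simp add: algebra_simps)
  ultimately show ?thesis using assms by linarith
qed

theorem lemma4p10:
  fixes rho :: "'i::finite \<Rightarrow> 'a \<Rightarrow> 'a"
    and C :: "'a \<Rightarrow> 'i \<Rightarrow> 'i \<Rightarrow> int"
    and R :: "'a \<Rightarrow> ('i \<Rightarrow> int) set"
    and a b :: 'a and i j l :: 'i
  assumes "cartan_scheme rho C"
    and "connected_cs rho"
    and "root_system rho C R"
    and "finite_root_system R"
    and "i \<noteq> j"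
    and "rho i a = b" and "rho j a = b" and "b \<noteq> a"
    and "rho l a = a"
  shows "C a i j * C a i l * C a j l = 0 \<and>
         (rho i (rho l b) \<noteq> rho l b \<and> rho j (rho l b) \<noteq> rho l b
           \<longrightarrow> (\<forall>n. C a l n = C b l n))"
proof -
  interpret rs rho C R using assms(3,4) by (simp add: rs_def)
  have P1: "C a i j * C a i l * C a j l = 0" using part1[OF assms(5-9)] .
  have li: "i \<noteq> l" using assms(6,8,9) by metis
  have lj: "j \<noteq> l" using assms(7,8,9) by metis
  have P2: "\<forall>n. C a l n = C b l n" if h1: "rho i (rho l b) \<noteq> rho l b" and h2: "rho j (rho l b) \<noteq> rho l b"
  proof (cases "C a i l = 0")
    case True then show ?thesis using transv[OF li True assms(6,9)] by blast
  next
    case F1: False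
    show ?thesis
    proof (cases "C a j l = 0")
      case True then show ?thesis using transv[OF lj True assms(7,9)] by blast
    next
      case F2: False
      have Cij: "C a i j = 0" using P1 F1 F2 by simp
      have nz: "C a l i \<noteq> 0" "C a l j \<noteq> 0" using F1 F2 gcm_sym0 by blast+
      have le: "C a i l \<le> -1" "C a l i \<le> -1" "C a j l \<le> -1" "C a l j \<le> -1"
        using gcm_le[of i l a] gcm_le[of l i a] gcm_le[of j l a] gcm_le[of l j a] li lj F1 F2 nz by auto
      have n1: "\<not> (C a i l = -1 \<and> C a l i = -1)"
        using chain3[OF li _ _ assms(6,9)] h1 by blast
      have n2: "\<not> (C a j l = -1 \<and> C a l j = -1)"
        using chain3[OF lj _ _ assms(7,9)] h2 by blast
      have "False"
        using growth2[OF assms(5) li lj assms(6,7,9) Cij le prod_ge2[OF le(1,2) n1] prod_ge2[OF le(3,4) n2]] .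
      then show ?thesis ..
    qed
  qed
  show ?thesis using P1 P2 by blast
qed

end
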